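(* Let $b>a>0$ and $t>0$. For any measurable $f:[0,t]\to\mathbb{R}_+$, $$\int_0^t\frac{ds}{(s+f(s))^{1+a}}\le\kappa(a,b)\Big(\int_0^t\frac{ds}{(s+f(s))^{1+b}}\Big)^{a/b},\qquad \kappa(a,b)=\frac{a+1}{a}\Big[\frac{b}{b+1}\Big]^{a/b}.$$ *)

theory Defs
  imports "HOL-Analysis.Analysis"
begin

definition ennreal_powr :: "ennreal \<Rightarrow> real \<Rightarrow> ennreal" where
  "ennreal_powr x p = (if x = \<infinity> then \<infinity> else ennreal (enn2real x powr p))"

definition kappa :: "real \<Rightarrow> real \<Rightarrow> real" where
  "kappa a b = (a + 1) / a * (b / (b + 1)) powr (a / b)"

end

theory Submission
  imports Defs
begin

lemma h_deriv:
  fixes a b c lam y :: real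
  assumes "y > 0"
  shows "((\<lambda>y. y powr -(1+a) - lam * y powr -(1+b)) has_real_derivative
          (-(1+a)) * y powr (-(1+a) - 1) - lam * ((-(1+b)) * y powr (-(1+b) - 1))) (at y)"
  using assms by (auto intro!: derivative_eq_intros has_real_derivative_powr)

lemma alg1:
  fixes a b P Q R :: real
  assumes "(1+a)*(P*Q) \<le> (1+a)*(R*Q)" "1+b > 0"
  shows "0 \<le> (-(1+a))*(P*Q) - ((1+a)/(1+b)*R)*((-(1+b))*Q)"
proof -
  have "((1+a)/(1+b)*R)*((-(1+b))*Q) = -((1+a)*(R*Q))" using assms(2) by (simp add: field_simps)
  then show ?thesis using assms(1) by (simp only:)
qed

lemma alg2:
  fixes a b P Q R :: real
  assumes "(1+a)*(R*Q) \<le> (1+a)*(P*Q)" "1+b > 0"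
  shows "(-(1+a))*(P*Q) - ((1+a)/(1+b)*R)*((-(1+b))*Q) \<le> 0"
proof -
  have "((1+a)/(1+b)*R)*((-(1+b))*Q) = -((1+a)*(R*Q))" using assms(2) by (simp add: field_simps)
  then show ?thesis using assms(1) by (simp only:)
qed

lemma h_sign_le:
  fixes a b c y :: real
  assumes "0 < a" "a < b" "0 < y" "y \<le> c"
  shows "0 \<le> (-(1+a)) * y powr (-(1+a) - 1) - ((1+a)/(1+b) * c powr (b-a)) * ((-(1+b)) * y powr (-(1+b) - 1))"
proof -
  have e: "y powr (-(1+a) - 1) = y powr (b-a) * y powr (-(1+b) - 1)"
    unfolding powr_add[symmetric] by (rule arg_cong[where f="\<lambda>x. y powr x"]) simp
  have m: "y powr (b-a) \<le> c powr (b-a)" using assms by (intro powr_mono2) auto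
  have p: "0 \<le> y powr (-(1+b) - 1)" by simp
  have "(1+a) * (y powr (b-a) * y powr (-(1+b) - 1)) \<le> (1+a) * (c powr (b-a) * y powr (-(1+b) - 1))"
    using m p assms by (intro mult_left_mono mult_right_mono) auto
  then show ?thesis unfolding e using assms by (intro alg1 alg2) auto
qed

lemma h_sign_ge:
  fixes a b c y :: real
  assumes "0 < a" "a < b" "0 < c" "c \<le> y"
  shows "(-(1+a)) * y powr (-(1+a) - 1) - ((1+a)/(1+b) * c powr (b-a)) * ((-(1+b)) * y powr (-(1+b) - 1)) \<le> 0"
proof -
  have e: "y powr (-(1+a) - 1) = y powr (b-a) * y powr (-(1+b) - 1)"
    unfolding powr_add[symmetric] by (rule arg_cong[where f="\<lambda>x. y powr x"]) simp
  have m: "c powr (b-a) \<le> y powr (b-a)" using assms by (intro powr_mono2) auto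
  have p: "0 \<le> y powr (-(1+b) - 1)" by simp
  have "(1+a) * (c powr (b-a) * y powr (-(1+b) - 1)) \<le> (1+a) * (y powr (b-a) * y powr (-(1+b) - 1))"
    using m p assms by (intro mult_left_mono mult_right_mono) auto
  then show ?thesis unfolding e using assms by (intro alg1 alg2) auto
qed

definition lamc :: "real \<Rightarrow> real \<Rightarrow> real \<Rightarrow> real" where
  "lamc a b c = (1+a)/(1+b) * c powr (b-a)"

definition hh :: "real \<Rightarrow> real \<Rightarrow> real \<Rightarrow> real \<Rightarrow> real" where
  "hh a b c y = y powr -(1+a) - lamc a b c * y powr -(1+b)"

definition phi :: "real \<Rightarrow> real \<Rightarrow> real \<Rightarrow> real \<Rightarrow> real" where
  "phi a b c s = (if s \<le> c then (b-a)/(1+b) * c powr -(1+a) else hh a b c s)"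

lemma h_inc:
  assumes "0 < a" "a < b" "0 < y" "y \<le> z" "z \<le> c"
  shows "hh a b c y \<le> hh a b c z"
  unfolding hh_def
proof (rule DERIV_nonneg_imp_nondecreasing[OF assms(4)])
  fix x assume x: "y \<le> x" "x \<le> z"
  show "\<exists>d. ((\<lambda>y. y powr -(1+a) - lamc a b c * y powr -(1+b)) has_real_derivative d) (at x) \<and> 0 \<le> d"
    using x assms h_deriv[of x a "lamc a b c" b] h_sign_le[of a b x c] unfolding lamc_def by force
qed

lemma h_dec:
  assumes "0 < a" "a < b" "0 < c" "c \<le> y" "y \<le> z"
  shows "hh a b c z \<le> hh a b c y"
  unfolding hh_def
proof (rule DERIV_nonpos_imp_nonincreasing[OF assms(5)])
  fix x assume x: "y \<le> x" "x \<le> z"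
  show "\<exists>d. ((\<lambda>y. y powr -(1+a) - lamc a b c * y powr -(1+b)) has_real_derivative d) (at x) \<and> d \<le> 0"
    using x assms h_deriv[of x a "lamc a b c" b] h_sign_ge[of a b c x] unfolding lamc_def by force
qed

lemma h_c:
  assumes "0 < a" "a < b" "0 < c"
  shows "hh a b c c = (b-a)/(1+b) * c powr -(1+a)"
proof -
  have e: "c powr (b-a) * c powr -(1+b) = c powr -(1+a)"
    unfolding powr_add[symmetric] by (rule arg_cong[where f="\<lambda>x. c powr x"]) simp
  have "hh a b c c = c powr -(1+a) - (1+a)/(1+b) * (c powr (b-a) * c powr -(1+b))"
    unfolding hh_def lamc_def by simp
  also have "\<dots> = c powr -(1+a) * (1 - (1+a)/(1+b))" unfolding e by (simp add: algebra_simps)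
  also have "1 - (1+a)/(1+b) = (b-a)/(1+b)" using assms by (simp add: field_simps)
  finally show ?thesis by simp
qed

lemma hh_nonneg:
  assumes "0 < a" "a < b" "0 < c" "c \<le> s"
  shows "0 \<le> hh a b c s"
proof -
  have e: "s powr -(1+a) = s powr (b-a) * s powr -(1+b)"
    unfolding powr_add[symmetric] by (rule arg_cong[where f="\<lambda>x. s powr x"]) simp
  have m: "c powr (b-a) \<le> s powr (b-a)" using assms by (intro powr_mono2) auto
  have q: "(1+a)/(1+b) \<le> 1" using assms by simp
  have "lamc a b c * s powr -(1+b) \<le> 1 * s powr (b-a) * s powr -(1+b)"
    unfolding lamc_def using m q assms by (intro mult_right_mono mult_mono) auto
  then show ?thesis unfolding hh_def e by simp
qed

lemma phi_nonneg:
  assumes "0 < a" "a < b" "0 < c"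
  shows "0 \<le> phi a b c s"
proof (cases "s \<le> c")
  case True then show ?thesis using assms by (simp add: phi_def)
next
  case False
  have e: "s powr -(1+a) = s powr (b-a) * s powr -(1+b)"
    unfolding powr_add[symmetric] by (rule arg_cong[where f="\<lambda>x. s powr x"]) simp
  have m: "c powr (b-a) \<le> s powr (b-a)" using assms False by (intro powr_mono2) auto
  have q: "(1+a)/(1+b) \<le> 1" using assms by simp
  have "lamc a b c * s powr -(1+b) \<le> 1 * s powr (b-a) * s powr -(1+b)"
    unfolding lamc_def using m q assms by (intro mult_right_mono mult_mono) auto
  then show ?thesis using False unfolding phi_def hh_def e by simp
qed

lemma pointwise:
  assumes "0 < a" "a < b" "0 < c" "0 \<le> s" "s \<le> y"
  shows "1 / y powr (1+a) \<le> lamc a b c * (1 / y powr (1+b)) + phi a b c s"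
proof (cases "y = 0")
  case True
  have "0 \<le> lamc a b c" unfolding lamc_def using assms by simp
  then show ?thesis using True phi_nonneg[OF assms(1-3), of s] by simp
next
  case False
  then have yp: "y > 0" using assms by simp
  have "hh a b c y \<le> phi a b c s"
  proof (cases "s \<le> c")
    case True
    have "hh a b c y \<le> hh a b c c"
    proof (cases "y \<le> c")
      case True then show ?thesis using h_inc[OF assms(1,2) yp True order.refl] by simp
    next
      case False then show ?thesis using h_dec[OF assms(1-3) order.refl, of y] by simp
    qed
    then show ?thesis using True h_c[OF assms(1-3)] by (simp add: phi_def)
  next
    case False
    then show ?thesis using h_dec[OF assms(1-3), of s y] assms by (simp add: phi_def)
  qed
  moreover have "y powr -(1+a) = 1 / y powr (1+a)" "y powr -(1+b) = 1 / y powr (1+b)"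
    by (simp_all only: powr_minus_divide)
  ultimately show ?thesis unfolding hh_def by (simp only:)
qed

lemma l1: "(0::real) < D \<Longrightarrow> 0 < a \<Longrightarrow> x*a \<le> D \<Longrightarrow> x/D \<le> 1/a"
  by (simp add: divide_simps)

lemma l2: fixes a b u P :: real assumes "a \<noteq> 0" "b \<noteq> 0" "u \<noteq> 0"
  shows "(b-a)/u*P + (P/a - (1+a)/u*P/b) = P * (((b-a)*a*b + b*u - a*(1+a)) / (a*b*u))"
  using assms by (simp add: field_simps)

lemma l3: fixes a b u :: real assumes "a \<noteq> 0" "b \<noteq> 0" "u \<noteq> 0" "u = 1 + b"
  shows "((b-a)*a*b + b*u - a*(1+a)) / (a*b*u) = (b-a)*(a+1)/(a*b)"
proof -
  have "(b-a)*a*b + b*u - a*(1+a) = (b-a)*(a+1)*u" using assms(4) by (simp add: algebra_simps)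
  then show ?thesis using assms by simp
qed

lemma alg3:
  fixes a b P :: real
  assumes "0 < a" "a < b"
  shows "(b-a)/(1+b)*P + (P/a - (1+a)/(1+b)*P/b) = (b-a)*(a+1)/(a*b)*P"
  using l2[of a b "1+b" P] l3[of a b "1+b"] assms by simp

lemma Kc_alg:
  assumes "0 < a" "a < b" "0 < c"
  shows "(b-a)/(1+b) * c powr -(1+a) * c + (c powr -a / a - lamc a b c * c powr -b / b)
         = (b-a)*(a+1)/(a*b) * c powr -a"
proof -
  have e1: "c powr -(1+a) * c = c powr -a"
    using assms powr_add[of c "-(1+a)" 1] by simp
  have e2: "c powr (b-a) * c powr -b = c powr -a"
    unfolding powr_add[symmetric] by (rule arg_cong[where f="\<lambda>x. c powr x"]) simp
  have "(b-a)/(1+b) * c powr -(1+a) * c + (c powr -a / a - lamc a b c * c powr -b / b)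
      = (b-a)/(1+b) * (c powr -(1+a) * c) + (c powr -a / a - (1+a)/(1+b) * (c powr (b-a) * c powr -b) / b)"
    unfolding lamc_def by (simp only: mult.assoc)
  also have "\<dots> = (b-a)*(a+1)/(a*b) * c powr -a" unfolding e1 e2 by (rule alg3[OF assms(1,2)])
  finally show ?thesis .
qed

lemma phi_int:
  assumes "0 < a" "a < b" "0 < c"
  shows "(\<integral>\<^sup>+ s. ennreal (phi a b c s) * indicator {0..t} s \<partial>lborel)
         \<le> ennreal ((b-a)*(a+1)/(a*b) * c powr -a)"
proof -
  define Kc where "Kc = (b-a)/(1+b) * c powr -(1+a)"
  define F where "F = (\<lambda>s::real. - (s powr -a) / a + lamc a b c * (s powr -b) / b)"
  have Kc0: "0 \<le> Kc" unfolding Kc_def using assms by simp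
  have [measurable]: "hh a b c \<in> borel_measurable borel" unfolding hh_def by measurable
  have "(\<integral>\<^sup>+ s. ennreal (phi a b c s) * indicator {0..t} s \<partial>lborel)
     \<le> (\<integral>\<^sup>+ s. ennreal Kc * indicator {0..c} s + ennreal (hh a b c s) * indicator {c..} s \<partial>lborel)"
    by (intro nn_integral_mono) (auto simp: phi_def Kc_def indicator_def)
  also have "\<dots> = (\<integral>\<^sup>+ s. ennreal Kc * indicator {0..c} s \<partial>lborel) + (\<integral>\<^sup>+ s. ennreal (hh a b c s) * indicator {c..} s \<partial>lborel)"
    by (intro nn_integral_add) auto
  also have "(\<integral>\<^sup>+ s. ennreal Kc * indicator {0..c} s \<partial>lborel) = ennreal Kc * ennreal c"
    using assms by (subst nn_integral_cmult_indicator) auto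
  also have "(\<integral>\<^sup>+ s. ennreal (hh a b c s) * indicator {c..} s \<partial>lborel) = 0 - F c"
  proof (rule nn_integral_FTC_atLeast)
    show "hh a b c \<in> borel_measurable borel" by simp
    show "0 \<le> hh a b c x" if "c \<le> x" for x using hh_nonneg[OF assms that] .
    show "(F \<longlongrightarrow> 0) at_top"
    proof -
      have "(F \<longlongrightarrow> - 0 / a + lamc a b c * 0 / b) at_top" unfolding F_def
        using assms by (intro tendsto_intros tendsto_neg_powr filterlim_ident) auto
      then show ?thesis by simp
    qed
    show "(F has_real_derivative hh a b c x) (at x)" if "c \<le> x" for x
    proof -
      have xp: "0 < x" using that assms by simp
      have "(F has_real_derivative (- ((-a) * x powr (-a - 1)) / a + lamc a b c * ((-b) * x powr (-b - 1)) / b)) (at x)"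
        unfolding F_def using xp by (auto intro!: derivative_eq_intros has_real_derivative_powr)
      moreover have "- ((-a) * x powr (-a - 1)) / a + lamc a b c * ((-b) * x powr (-b - 1)) / b = hh a b c x"
      proof -
        have e: "x powr (-a-1) = x powr -(1+a)" "x powr (-b-1) = x powr -(1+b)"
          by (rule arg_cong[where f="\<lambda>y. x powr y"], simp)+
        show ?thesis unfolding hh_def e using assms by (simp add: field_simps)
      qed
      ultimately show ?thesis by simp
    qed
  qed
  also have "ennreal Kc * ennreal c + ennreal (0 - F c) = ennreal ((b-a)*(a+1)/(a*b) * c powr -a)"
  proof -
    have "0 \<le> 0 - F c"
    proof -
      have "hh a b c c \<ge> 0" using hh_nonneg[OF assms order.refl] .
      have e2: "c powr (b-a) * c powr -b = c powr -a"
        unfolding powr_add[symmetric] by (rule arg_cong[where f="\<lambda>x. c powr x"]) simp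
      have "0 - F c = c powr -a * (1/a - (1+a)/((1+b)*b))"
        unfolding F_def lamc_def using e2 assms by (simp add: field_simps)
      moreover have "(1+a)/((1+b)*b) \<le> 1/a"
      proof (rule l1)
        have "(1+a)*a < (1+b)*b" using assms by (intro mult_strict_mono) auto
        then show "(1+a)*a \<le> (1+b)*b" by simp
      qed (use assms in auto)
      ultimately show ?thesis by simp
    qed
    then have "ennreal Kc * ennreal c + ennreal (0 - F c) = ennreal (Kc * c + (0 - F c))"
    proof -
      have "ennreal Kc * ennreal c = ennreal (Kc * c)" using Kc0 assms by (simp add: ennreal_mult)
      moreover have "ennreal (Kc * c + (0 - F c)) = ennreal (Kc * c) + ennreal (0 - F c)"
        using Kc0 assms \<open>0 \<le> 0 - F c\<close> by (intro ennreal_plus) auto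
      ultimately show ?thesis by simp
    qed
    also have "Kc * c + (0 - F c) = (b-a)*(a+1)/(a*b) * c powr -a"
      using Kc_alg[OF assms] unfolding Kc_def F_def by simp
    finally show ?thesis .
  qed
  finally show ?thesis by simp
qed

lemma main_bound:
  fixes a b t c :: real and f :: "real \<Rightarrow> real"
  assumes "0 < a" "a < b" "0 < c"
    and fm: "f \<in> borel_measurable (restrict_space lebesgue {0..t})"
    and fp: "\<forall>s\<in>{0..t}. 0 \<le> f s"
  shows "(\<integral>\<^sup>+ s\<in>{0..t}. ennreal (1 / (s + f s) powr (1 + a)) \<partial>lebesgue)
         \<le> ennreal (lamc a b c) * (\<integral>\<^sup>+ s\<in>{0..t}. ennreal (1 / (s + f s) powr (1 + b)) \<partial>lebesgue)
           + ennreal ((b-a)*(a+1)/(a*b) * c powr -a)"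
proof -
  define M where "M = restrict_space (lebesgue :: real measure) {0..t}"
  have sp: "space M = {0..t}" unfolding M_def by (simp add: space_restrict_space)
  have [measurable]: "f \<in> borel_measurable M" using fm unfolding M_def .
  have idm[measurable]: "(\<lambda>s::real. s) \<in> borel_measurable M"
    unfolding M_def by (intro measurable_restrict_space1 measurable_completion) simp
  have R: "\<And>g. (\<integral>\<^sup>+ s\<in>{0..t}. g s \<partial>lebesgue) = nn_integral M g"
    unfolding M_def by (subst nn_integral_restrict_space) auto
  have phim: "phi a b c \<in> borel_measurable borel" unfolding phi_def hh_def by measurable
  have phimM[measurable]: "(\<lambda>s. ennreal (phi a b c s)) \<in> borel_measurable M"
    unfolding M_def by (intro measurable_compose[OF _ measurable_ennreal] measurable_restrict_space1
        measurable_compose[OF measurable_completion[of _ lborel borel] phim]) auto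
  have gbm[measurable]: "(\<lambda>s. ennreal (1 / (s + f s) powr (1 + b))) \<in> borel_measurable M"
    by measurable
  have lam0: "0 \<le> lamc a b c" unfolding lamc_def using assms by simp
  have "nn_integral M (\<lambda>s. ennreal (1 / (s + f s) powr (1 + a)))
      \<le> nn_integral M (\<lambda>s. ennreal (lamc a b c) * ennreal (1 / (s + f s) powr (1 + b)) + ennreal (phi a b c s))"
  proof (rule nn_integral_mono)
    fix s assume "s \<in> space M"
    then have s: "0 \<le> s" "0 \<le> f s" using fp sp by auto
    have "ennreal (1 / (s + f s) powr (1 + a)) \<le> ennreal (lamc a b c * (1 / (s + f s) powr (1+b)) + phi a b c s)"
      using pointwise[OF assms(1-3) s(1), of "s + f s"] s by (intro ennreal_leI) auto
    also have "\<dots> = ennreal (lamc a b c) * ennreal (1 / (s + f s) powr (1 + b)) + ennreal (phi a b c s)"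
      using lam0 phi_nonneg[OF assms(1-3), of s]
      by (simp add: ennreal_plus ennreal_mult del: times_divide_eq_right)
    finally show "ennreal (1 / (s + f s) powr (1 + a)) \<le> \<dots>" .
  qed
  also have "\<dots> = ennreal (lamc a b c) * nn_integral M (\<lambda>s. ennreal (1 / (s + f s) powr (1 + b))) + nn_integral M (\<lambda>s. ennreal (phi a b c s))"
    by (subst nn_integral_add) (auto simp: nn_integral_cmult)
  also have "nn_integral M (\<lambda>s. ennreal (phi a b c s)) = (\<integral>\<^sup>+ s. ennreal (phi a b c s) * indicator {0..t} s \<partial>lborel)"
    unfolding R[symmetric] by (simp add: nn_integral_completion)
  also have "\<dots> \<le> ennreal ((b-a)*(a+1)/(a*b) * c powr -a)" by (rule phi_int[OF assms(1-3)])
  finally show ?thesis unfolding R by (simp add: add_left_mono)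
qed

lemma l4: fixes a b u :: real assumes "a \<noteq> 0" "b \<noteq> 0" "u \<noteq> 0"
  shows "(1+a)/u * (u/b) + (b-a)*(a+1)/(a*b) = (a+1)/a"
  using assms by (simp add: field_simps)

lemma final_alg:
  fixes a b j :: real
  assumes "0 < a" "a < b" "0 < j"
  defines "c \<equiv> ((1+b)/(b*j)) powr (1/b)"
  shows "lamc a b c * j + (b-a)*(a+1)/(a*b) * c powr -a = kappa a b * j powr (a/b)"
proof -
  define q where "q = (1+b)/(b*j)"
  have qp: "0 < q" unfolding q_def using assms by simp
  define Q where "Q = q powr (-a/b)"
  have c1: "c powr (b-a) = q * Q"
  proof -
    have "c powr (b-a) = q powr ((b-a)/b)" unfolding c_def q_def[symmetric] using qp by (simp add: powr_powr)
    also have "(b-a)/b = 1 + (-a/b)" using assms by (simp add: field_simps)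
    also have "q powr (1 + (-a/b)) = q * Q" unfolding Q_def using qp powr_add[of q 1 "-a/b"] by simp
    finally show ?thesis .
  qed
  have c2: "c powr -a = Q" unfolding c_def q_def[symmetric] Q_def using qp by (simp add: powr_powr)
  have qj: "q * j = (1+b)/b" unfolding q_def using assms by simp
  have "lamc a b c * j + (b-a)*(a+1)/(a*b) * c powr -a = ((1+a)/(1+b) * (q*j) + (b-a)*(a+1)/(a*b)) * Q"
    unfolding lamc_def c1 c2 by (simp add: algebra_simps)
  also have "(1+a)/(1+b) * (q*j) + (b-a)*(a+1)/(a*b) = (a+1)/a"
    unfolding qj using assms l4[of a b "1+b"] by simp
  also have "Q = (b/(b+1)) powr (a/b) * j powr (a/b)"
  proof -
    have "Q = (inverse q) powr (a/b)" unfolding Q_def using qp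
      by (simp add: inverse_powr powr_minus)
    also have "inverse q = (b/(b+1)) * j" unfolding q_def using assms by (simp add: field_simps)
    also have "\<dots> powr (a/b) = (b/(b+1)) powr (a/b) * j powr (a/b)"
      using assms powr_mult[of "b/(b+1)" j "a/b"] by simp
    finally show ?thesis .
  qed
  finally show ?thesis unfolding kappa_def by simp
qed

theorem lemma1p3:
  fixes a b t :: real and f :: "real \<Rightarrow> real"
  assumes "0 < a" "a < b" "0 < t"
    and "f \<in> borel_measurable (restrict_space lebesgue {0..t})"
    and "\<forall>s\<in>{0..t}. 0 \<le> f s"
  shows "(\<integral>\<^sup>+ s\<in>{0..t}. ennreal (1 / (s + f s) powr (1 + a)) \<partial>lebesgue)
         \<le> ennreal (kappa a b) *
           ennreal_powr (\<integral>\<^sup>+ s\<in>{0..t}. ennreal (1 / (s + f s) powr (1 + b)) \<partial>lebesgue) (a / b)"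
proof -
  define I where "I = (\<integral>\<^sup>+ s\<in>{0..t}. ennreal (1 / (s + f s) powr (1 + a)) \<partial>lebesgue)"
  define J where "J = (\<integral>\<^sup>+ s\<in>{0..t}. ennreal (1 / (s + f s) powr (1 + b)) \<partial>lebesgue)"
  define K where "K = (b-a)*(a+1)/(a*b)"
  have Kp: "0 < K" unfolding K_def using assms by simp
  have kp: "0 < kappa a b" unfolding kappa_def using assms by simp
  have MB: "\<And>c. 0 < c \<Longrightarrow> I \<le> ennreal (lamc a b c) * J + ennreal (K * c powr -a)"
    unfolding I_def J_def K_def using main_bound[OF assms(1,2) _ assms(4,5)] by blast
  have "I \<le> ennreal (kappa a b) * ennreal_powr J (a / b)"
  proof (cases J rule: ennreal_cases)
    case top
    then show ?thesis using kp by (simp add: ennreal_powr_def ennreal_mult_top)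
  next
    case (real j)
    show ?thesis
    proof (cases "j = 0")
      case True
      have "I \<le> 0"
      proof (rule ennreal_le_epsilon)
        fix e :: real assume e: "0 < e"
        define c where "c = (K/e) powr (1/a)"
        have cp: "0 < c" unfolding c_def using Kp e by simp
        have "c powr -a = e / K" unfolding c_def using Kp e assms
          by (simp add: powr_powr powr_minus_divide)
        then have "K * c powr -a = e" using Kp by simp
        then show "I \<le> 0 + ennreal e" using MB[OF cp] real True by simp
      qed
      then show ?thesis by simp
    next
      case False
      then have jp: "0 < j" using real by simp
      define c where "c = ((1+b)/(b*j)) powr (1/b)"
      have cp: "0 < c" unfolding c_def using jp assms by simp
      have lam0: "0 \<le> lamc a b c" unfolding lamc_def using assms by simp
      have "I \<le> ennreal (lamc a b c) * ennreal j + ennreal (K * c powr -a)"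
        using MB[OF cp] real by simp
      also have "\<dots> = ennreal (lamc a b c * j + K * c powr -a)"
        using lam0 jp Kp by (simp add: ennreal_mult ennreal_plus)
      also have "lamc a b c * j + K * c powr -a = kappa a b * j powr (a/b)"
        unfolding K_def c_def using final_alg[OF assms(1,2) jp] by simp
      also have "ennreal (kappa a b * j powr (a/b)) = ennreal (kappa a b) * ennreal_powr J (a/b)"
        using real kp by (simp add: ennreal_powr_def ennreal_mult)
      finally show ?thesis .
    qed
  qed
  then show ?thesis unfolding I_def J_def .
qed

end
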